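(* Let $\ell\geq 4$, let $a_1,\dots,a_\ell\in\mathbb{R}\setminus\{0\}$, and let $B\subseteq\mathbb{R}$ with $|B|=4$. Then \[ \left|\left\{ I\subseteq[\ell] : \sum_{i\in I}a_i\in B\right\}\right| \leq \frac{15}{16}2^{\ell}.\] *)

theory Defs
  imports Complex_Main
begin

end

theory Submission
  imports Defs
begin

lemma sums_card:
  fixes a :: "nat \<Rightarrow> real"
  assumes "finite S" "\<forall>i\<in>S. a i \<noteq> 0"
  shows "card S + 1 \<le> card ((\<lambda>I. sum a I) ` Pow S)"
  using assms
proof (induction S rule: finite_induct)
  case empty then show ?case by simp
next
  case (insert x S)
  define V where "V = (\<lambda>I. sum a I) ` Pow S"
  have fin: "finite V" "V \<noteq> {}" using insert by (auto simp: V_def)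
  have IH: "card S + 1 \<le> card V" using insert by (simp add: V_def)
  have sub: "V \<subseteq> (\<lambda>I. sum a I) ` Pow (insert x S)" unfolding V_def by auto
  have ax: "a x \<noteq> 0" using insert by simp
  obtain w where w: "w \<in> (\<lambda>I. sum a I) ` Pow (insert x S)" "w \<notin> V"
  proof (cases "a x > 0")
    case True
    have "Max V \<in> V" using fin by simp
    then obtain I0 where I0: "I0 \<subseteq> S" "Max V = sum a I0" unfolding V_def by auto
    have fI: "finite I0" using I0 insert.hyps finite_subset by blast
    have "x \<notin> I0" using I0 insert.hyps by blast
    hence "sum a (insert x I0) = a x + sum a I0" using fI by simp
    hence "Max V + a x \<in> (\<lambda>I. sum a I) ` Pow (insert x S)" using I0
      by (auto intro!: image_eqI[where x="insert x I0"])
    moreover have "Max V + a x \<notin> V" using True fin Max_ge by force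
    ultimately show ?thesis by (rule that)
  next
    case False
    hence neg: "a x < 0" using ax by linarith
    have "Min V \<in> V" using fin by simp
    then obtain I0 where I0: "I0 \<subseteq> S" "Min V = sum a I0" unfolding V_def by auto
    have fI: "finite I0" using I0 insert.hyps finite_subset by blast
    have "x \<notin> I0" using I0 insert.hyps by blast
    hence "sum a (insert x I0) = a x + sum a I0" using fI by simp
    hence "Min V + a x \<in> (\<lambda>I. sum a I) ` Pow (insert x S)" using I0
      by (auto intro!: image_eqI[where x="insert x I0"])
    moreover have "Min V + a x \<notin> V" using neg fin Min_le by force
    ultimately show ?thesis by (rule that)
  qed
  have "card (insert w V) \<le> card ((\<lambda>I. sum a I) ` Pow (insert x S))"
    by (rule card_mono) (use insert.hyps w sub in auto)
  moreover have "card (insert w V) = card V + 1" using fin w by simp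
  moreover have "card (insert x S) = card S + 1" using insert.hyps by simp
  ultimately show ?case using IH by linarith
qed

lemma main:
  fixes a :: "nat \<Rightarrow> real"
  assumes "4 \<le> l"
  shows "\<forall>i\<in>{1..l}. a i \<noteq> 0 \<Longrightarrow> finite B \<Longrightarrow> card B = 4 \<Longrightarrow>
     real (card {I. I \<subseteq> {1..l} \<and> (\<Sum>i\<in>I. a i) \<in> B}) \<le> 15 / 16 * 2 ^ l"
  using assms
proof (induction l arbitrary: B rule: nat_induct_at_least)
  case base
  let ?F = "{I. I \<subseteq> {1..4::nat} \<and> (\<Sum>i\<in>I. a i) \<in> B}"
  have c: "card ({1..4::nat}) + 1 \<le> card ((\<lambda>I. sum a I) ` Pow {1..4})"
    by (rule sums_card) (use base in auto)
  have "\<not> (\<lambda>I. sum a I) ` Pow {1..4} \<subseteq> B"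
  proof
    assume "(\<lambda>I. sum a I) ` Pow {1..4} \<subseteq> B"
    hence "card ((\<lambda>I. sum a I) ` Pow {1..4::nat}) \<le> 4" using base card_mono by metis
    with c show False by simp
  qed
  hence "?F \<subset> Pow {1..4}" by auto
  hence "card ?F < card (Pow {1..4::nat})" by (intro psubset_card_mono) auto
  hence "card ?F \<le> 15" by (simp add: card_Pow)
  thus ?case by simp
next
  case (Suc n)
  define c where "c = a (Suc n)"
  define F1 where "F1 = {I. I \<subseteq> {1..n} \<and> (\<Sum>i\<in>I. a i) \<in> B}"
  define F2 where "F2 = {I. I \<subseteq> {1..n} \<and> (\<Sum>i\<in>I. a i) \<in> (\<lambda>b. b - c) ` B}"
  let ?F = "{I. I \<subseteq> {1..Suc n} \<and> (\<Sum>i\<in>I. a i) \<in> B}"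
  have sub: "?F \<subseteq> F1 \<union> insert (Suc n) ` F2"
  proof
    fix I assume I: "I \<in> ?F"
    show "I \<in> F1 \<union> insert (Suc n) ` F2"
    proof (cases "Suc n \<in> I")
      case False
      hence "I \<subseteq> {1..n}" using I by (auto simp: le_Suc_eq)
      thus ?thesis using I by (simp add: F1_def)
    next
      case True
      define J where "J = I - {Suc n}"
      have J: "J \<subseteq> {1..n}" using I by (auto simp: J_def le_Suc_eq)
      have fJ: "finite J" using J finite_subset by blast
      have IJ: "I = insert (Suc n) J" using True by (auto simp: J_def)
      have nJ: "Suc n \<notin> J" by (simp add: J_def)
      have "sum a I = c + sum a J" by (subst IJ) (simp add: fJ nJ c_def)
      hence "sum a J \<in> (\<lambda>b. b - c) ` B" using I by (auto intro!: image_eqI[where x="sum a I"])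
      hence "J \<in> F2" using J by (simp add: F2_def)
      thus ?thesis using IJ by blast
    qed
  qed
  have f1: "finite F1" unfolding F1_def by (rule finite_subset[of _ "Pow {1..n}"]) auto
  have f2: "finite F2" unfolding F2_def by (rule finite_subset[of _ "Pow {1..n}"]) auto
  have "card ?F \<le> card (F1 \<union> insert (Suc n) ` F2)"
    using sub f1 f2 by (intro card_mono) auto
  also have "\<dots> \<le> card F1 + card (insert (Suc n) ` F2)" by (rule card_Un_le)
  also have "\<dots> \<le> card F1 + card F2" using card_image_le f2 by simp
  finally have le: "card ?F \<le> card F1 + card F2" .
  have h1: "real (card F1) \<le> 15 / 16 * 2 ^ n" unfolding F1_def
    by (rule Suc.IH) (use Suc.prems in auto)
  have cB: "card ((\<lambda>b. b - c) ` B) = 4"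
    using Suc.prems by (subst card_image) (auto simp: inj_on_def)
  have h2: "real (card F2) \<le> 15 / 16 * 2 ^ n" unfolding F2_def
    by (rule Suc.IH) (use Suc.prems cB in auto)
  have "real (card ?F) \<le> real (card F1) + real (card F2)" using le by linarith
  also have "\<dots> \<le> 15 / 16 * 2 ^ Suc n" using h1 h2 by simp
  finally show ?case .
qed

theorem lemma4p1:
  fixes l :: nat and a :: "nat \<Rightarrow> real" and B :: "real set"
  assumes "l \<ge> 4"
    and "\<And>i. i \<in> {1..l} \<Longrightarrow> a i \<noteq> 0"
    and "finite B" and "card B = 4"
  shows "real (card {I. I \<subseteq> {1..l} \<and> (\<Sum>i\<in>I. a i) \<in> B}) \<le> 15 / 16 * 2 ^ l"
  using main[OF assms(1)] assms(2-4) by blast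

end
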